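(* Let $\lambda>0$ and let $\gamma(a,x)=\int_0^x e^{-t}t^{a-1}\,dt$ denote the incomplete gamma function. For every $y>0$, $$\int_0^1\frac{\gamma(y,yt)}{\Gamma(y)}\,t^{\lambda-1}\,dt+\int_1^\infty\Big(\frac{\gamma(y,yt)}{\Gamma(y)}-1\Big)t^{\lambda-1}\,dt=\frac{1}{\lambda}\Big(1-\frac{1}{g_\lambda(y)}\Big),$$ where $g_\lambda(y)=\frac{y^{\lambda}\Gamma(y)}{\Gamma(\lambda+y)}$. *)

theory Defs
  imports "HOL-Analysis.Analysis"
begin

definition lower_inc_gamma :: "real \<Rightarrow> real \<Rightarrow> real" where
  "lower_inc_gamma a x = integral {0..x} (\<lambda>t. exp (-t) * t powr (a - 1))"

definition g_lam :: "real \<Rightarrow> real \<Rightarrow> real" where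
  "g_lam lam y = y powr lam * Gamma y / Gamma (lam + y)"

end

theory Submission
  imports Defs
begin

lemma h_abs:
  fixes a :: real assumes a: "a > 0"
  shows "(\<lambda>t. exp (-t) * t powr (a - 1)) absolutely_integrable_on {0..}"
proof -
  have "((\<lambda>t. exp (-t) * t powr (a - 1)) has_integral Gamma a) {0..}"
    using Gamma_integral_real[OF a] by (simp add: exp_minus field_simps)
  then show ?thesis
    by (intro nonnegative_absolutely_integrable_1) (auto simp: integrable_on_def)
qed

lemma h_hasint:
  fixes a :: real assumes a: "a > 0"
  shows "((\<lambda>t. exp (-t) * t powr (a - 1)) has_integral Gamma a) {0..}"
  using Gamma_integral_real[OF a] by (simp add: exp_minus field_simps)

lemma h_int:
  fixes a :: real assumes a: "a > 0"
  shows "(\<lambda>t. exp (-t) * t powr (a - 1)) integrable_on {0..x}"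
proof -
  have "set_integrable lebesgue {0..} (\<lambda>t. exp (-t) * t powr (a - 1))"
    using h_abs[OF a] by simp
  then have "set_integrable lebesgue {0..x} (\<lambda>t. exp (-t) * t powr (a - 1))"
    by (rule set_integrable_subset) auto
  then show ?thesis by (rule set_lebesgue_integral_eq_integral(1))
qed

lemma L_lim:
  fixes a :: real assumes a: "a > 0"
  shows "(lower_inc_gamma a \<longlongrightarrow> Gamma a) at_top"
proof -
  let ?h = "\<lambda>t. exp (-t) * t powr (a - 1)"
  have si: "set_integrable lebesgue {0..} ?h"
    using h_abs[OF a] by simp
  have "((\<lambda>b. set_lebesgue_integral lebesgue {0..b} ?h) \<longlongrightarrow> set_lebesgue_integral lebesgue {0..} ?h) at_top"
    by (rule tendsto_set_lebesgue_integral_at_top[OF _ si]) auto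
  moreover have "set_lebesgue_integral lebesgue {0..} ?h = Gamma a"
    using set_lebesgue_integral_eq_integral(2)[OF si] h_hasint[OF a] integral_unique by simp
  moreover have "set_lebesgue_integral lebesgue {0..b} ?h = lower_inc_gamma a b" for b
  proof -
    have "set_integrable lebesgue {0..b} ?h"
      using si by (rule set_integrable_subset) auto
    then show ?thesis unfolding lower_inc_gamma_def by (rule set_lebesgue_integral_eq_integral(2))
  qed
  ultimately show ?thesis by simp
qed

lemma L_deriv:
  fixes a x :: real assumes a: "a > 0" and x: "x > 0"
  shows "(lower_inc_gamma a has_real_derivative exp (-x) * x powr (a - 1)) (at x)"
proof -
  have "((\<lambda>u. integral {0..u} (\<lambda>t. exp (-t) * t powr (a - 1))) has_vector_derivative
      exp (-x) * x powr (a - 1)) (at x within ({0..x+1} - {}))"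
  proof (rule integral_has_vector_derivative_continuous_at[OF h_int[OF a]])
    have "isCont (\<lambda>t. exp (-t) * t powr (a - 1)) x"
      using x by (intro continuous_intros) auto
    then show "continuous (at x within ({0..x+1} - {})) (\<lambda>t. exp (-t) * t powr (a - 1))"
      by (rule continuous_at_imp_continuous_at_within)
  qed (use x in auto)
  then have "((\<lambda>u. integral {0..u} (\<lambda>t. exp (-t) * t powr (a - 1))) has_vector_derivative
      exp (-x) * x powr (a - 1)) (at x)"
    using at_within_Icc_at[of 0 x "x+1"] x by simp
  then show ?thesis unfolding lower_inc_gamma_def
    by (simp add: has_real_derivative_iff_has_vector_derivative)
qed

lemma L_cont:
  fixes a b :: real assumes a: "a > 0"
  shows "continuous_on {0..b} (lower_inc_gamma a)"
  unfolding lower_inc_gamma_def by (rule indefinite_integral_continuous_1[OF h_int[OF a]])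

lemma L0: "lower_inc_gamma a 0 = 0"
  unfolding lower_inc_gamma_def by simp

lemma L_le:
  fixes a x :: real assumes a: "a > 0"
  shows "lower_inc_gamma a x \<le> Gamma a"
proof -
  have "integral {0..x} (\<lambda>t. exp (-t) * t powr (a - 1)) \<le> integral {0..} (\<lambda>t. exp (-t) * t powr (a - 1))"
    by (rule integral_subset_le) (use h_int[OF a] h_hasint[OF a] in auto)
  then show ?thesis unfolding lower_inc_gamma_def using integral_unique[OF h_hasint[OF a]] by simp
qed

lemma L_diff:
  fixes a u X :: real assumes a: "a > 0" and "0 \<le> u" "u \<le> X"
  shows "lower_inc_gamma a X - lower_inc_gamma a u = integral {u..X} (\<lambda>t. exp (-t) * t powr (a - 1))"
proof -
  have "integral {0..u} (\<lambda>t. exp (-t) * t powr (a - 1)) + integral {u..X} (\<lambda>t. exp (-t) * t powr (a - 1))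
      = integral {0..X} (\<lambda>t. exp (-t) * t powr (a - 1))"
    by (rule Henstock_Kurzweil_Integration.integral_combine[OF assms(2,3) h_int[OF a]])
  then show ?thesis unfolding lower_inc_gamma_def by simp
qed

lemma tail:
  fixes y lam u :: real assumes y: "y > 0" and lam: "lam > 0" and u: "u > 0"
  shows "u powr lam * (Gamma y - lower_inc_gamma y u) \<le> Gamma (y + lam) - lower_inc_gamma (y + lam) u"
proof -
  have lim1: "((\<lambda>X. u powr lam * (lower_inc_gamma y X - lower_inc_gamma y u)) \<longlongrightarrow>
      u powr lam * (Gamma y - lower_inc_gamma y u)) at_top"
    by (intro tendsto_intros L_lim y)
  have lim2: "((\<lambda>X. lower_inc_gamma (y + lam) X - lower_inc_gamma (y + lam) u) \<longlongrightarrow>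
      Gamma (y + lam) - lower_inc_gamma (y + lam) u) at_top"
    by (intro tendsto_intros L_lim) (use y lam in auto)
  have ev: "\<forall>\<^sub>F X in at_top. u powr lam * (lower_inc_gamma y X - lower_inc_gamma y u)
      \<le> lower_inc_gamma (y + lam) X - lower_inc_gamma (y + lam) u"
    using eventually_ge_at_top[of u]
  proof eventually_elim
    case (elim X)
    have i1: "(\<lambda>t. exp (-t) * t powr (y - 1)) integrable_on {u..X}"
      by (rule integrable_subinterval_real[OF h_int[OF y, of X]]) (use u in auto)
    have i2: "(\<lambda>t. exp (-t) * t powr (y + lam - 1)) integrable_on {u..X}"
    proof -
      have "y + lam > 0" using y lam by simp
      from h_int[OF this, of X] show ?thesis
        by (rule integrable_subinterval_real) (use u in auto)
    qed
    have "u powr lam * (lower_inc_gamma y X - lower_inc_gamma y u)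
        = integral {u..X} (\<lambda>t. u powr lam * (exp (-t) * t powr (y - 1)))"
      using L_diff[OF y, of u X] u elim by simp
    also have "\<dots> \<le> integral {u..X} (\<lambda>t. exp (-t) * t powr (y + lam - 1))"
    proof (rule integral_le)
      show "(\<lambda>t. u powr lam * (exp (-t) * t powr (y - 1))) integrable_on {u..X}"
        using i1 by (rule integrable_on_mult_right)
      show "i2'": "(\<lambda>t. exp (-t) * t powr (y + lam - 1)) integrable_on {u..X}" by (rule i2)
      fix t assume t: "t \<in> {u..X}"
      then have tp: "t > 0" using u by auto
      have "t powr (y + lam - 1) = t powr lam * t powr (y - 1)"
        by (simp add: powr_add[symmetric] algebra_simps)
      moreover have "u powr lam \<le> t powr lam"
        using t u lam by (intro powr_mono2) auto
      ultimately show "u powr lam * (exp (-t) * t powr (y - 1)) \<le> exp (-t) * t powr (y + lam - 1)"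
        by (simp add: mult_right_mono)
    qed
    also have "\<dots> = lower_inc_gamma (y + lam) X - lower_inc_gamma (y + lam) u"
      using L_diff[of "y + lam" u X] u elim y lam by simp
    finally show ?case .
  qed
  show ?thesis by (rule tendsto_le[OF _ lim2 lim1 ev]) simp
qed

theorem lemma2p2:
  fixes lam y :: real
  assumes "lam > 0" and "y > 0"
  shows "\<exists>A B.
     ((\<lambda>t. lower_inc_gamma y (y * t) / Gamma y * t powr (lam - 1)) has_integral A) {0..1} \<and>
     ((\<lambda>t. (lower_inc_gamma y (y * t) / Gamma y - 1) * t powr (lam - 1)) has_integral B) {1..} \<and>
     A + B = 1 / lam * (1 - 1 / g_lam lam y)"
proof -
  have lam: "lam > 0" and y: "y > 0" using assms by auto
  have yl: "y + lam > 0" using lam y by simp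
  have Gy: "Gamma y > 0" using y by simp
  have Gyl: "Gamma (y + lam) > 0" using yl by simp
  have ypl: "y powr lam > 0" using y by simp
  define P where "P t = lower_inc_gamma y (y * t) / Gamma y" for t
  define Q where "Q t = lower_inc_gamma (y + lam) (y * t) / (Gamma y * y powr lam)" for t
  define p where "p t = exp (-(y*t)) * (y*t) powr (y - 1) * y / Gamma y" for t
  define Qinf where "Qinf = Gamma (y + lam) / (Gamma y * y powr lam)"
  have dP: "(P has_real_derivative p t) (at t)" if t: "t > 0" for t
  proof -
    have "((\<lambda>t. lower_inc_gamma y (y * t)) has_real_derivative exp (-(y*t)) * (y*t) powr (y - 1) * y) (at t)"
      by (rule DERIV_chain2[OF L_deriv[OF y] DERIV_cmult_Id]) (use t y in simp)
    then show ?thesis unfolding P_def p_def by (rule DERIV_cdivide)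
  qed
  have dQ: "(Q has_real_derivative p t * t powr lam) (at t)" if t: "t > 0" for t
  proof -
    have "((\<lambda>t. lower_inc_gamma (y + lam) (y * t)) has_real_derivative exp (-(y*t)) * (y*t) powr (y + lam - 1) * y) (at t)"
      by (rule DERIV_chain2[OF L_deriv[OF yl] DERIV_cmult_Id]) (use t y in simp)
    then have "(Q has_real_derivative exp (-(y*t)) * (y*t) powr (y + lam - 1) * y / (Gamma y * y powr lam)) (at t)"
      unfolding Q_def by (rule DERIV_cdivide)
    moreover have "exp (-(y*t)) * (y*t) powr (y + lam - 1) * y / (Gamma y * y powr lam) = p t * t powr lam"
    proof -
      have "(y*t) powr (y + lam - 1) = (y*t) powr (y - 1) * (y powr lam * t powr lam)"
        using y t by (simp add: powr_add[symmetric] powr_mult algebra_simps)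
      then show ?thesis unfolding p_def using Gy ypl by (simp add: field_simps)
    qed
    ultimately show ?thesis by simp
  qed
  have dpow: "((\<lambda>t. t powr lam) has_real_derivative lam * t powr (lam - 1)) (at t)" if "t > 0" for t
    using has_real_derivative_powr[OF that] .
  have cP: "continuous_on {0..b} P" if "b \<ge> 0" for b
    unfolding P_def
  proof (intro continuous_on_divide continuous_on_const continuous_on_compose2[OF L_cont[OF y, of "y*b"]])
    show "continuous_on {0..b} ((*) y)" by (intro continuous_intros)
    show "(*) y ` {0..b} \<subseteq> {0..y * b}" using y by (auto intro: mult_left_mono)
  qed (use Gy in auto)
  have cQ: "continuous_on {0..b} Q" if "b \<ge> 0" for b
    unfolding Q_def
  proof (intro continuous_on_divide continuous_on_const continuous_on_compose2[OF L_cont[OF yl, of "y*b"]])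
    show "continuous_on {0..b} ((*) y)" by (intro continuous_intros)
    show "(*) y ` {0..b} \<subseteq> {0..y * b}" using y by (auto intro: mult_left_mono)
  qed (use Gy ypl in auto)
  have cpow: "continuous_on {0..b} (\<lambda>t. t powr lam)" for b
    by (rule continuous_on_powr') (use lam in \<open>auto intro: continuous_intros\<close>)

  define F where "F t = (P t * t powr lam - Q t) / lam" for t
  have dF: "(F has_real_derivative P t * t powr (lam - 1)) (at t)" if t: "t > 0" for t
  proof -
    have "(F has_real_derivative ((p t * t powr lam + lam * t powr (lam - 1) * P t) - p t * t powr lam) / lam) (at t)"
      unfolding F_def by (intro DERIV_cdivide DERIV_diff DERIV_mult[OF dP[OF t] dpow[OF t]] dQ t)
    then show ?thesis using lam by (simp add: mult.commute)
  qed
  have hA: "((\<lambda>t. P t * t powr (lam - 1)) has_integral F 1 - F 0) {0..1}"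
  proof (rule fundamental_theorem_of_calculus_interior)
    show "continuous_on {0..1} F" unfolding F_def
      by (intro continuous_on_divide continuous_on_diff continuous_on_mult cP cQ cpow continuous_on_const) (use lam in auto)
    show "(F has_vector_derivative P t * t powr (lam - 1)) (at t)" if "t \<in> {0<..<1}" for t
      using dF[of t] that by (simp add: has_real_derivative_iff_has_vector_derivative)
  qed simp
  have F0: "F 0 = 0" unfolding F_def Q_def using L0 by simp

  define h where "h t = (1 - P t) * t powr (lam - 1)" for t
  define H where "H t = ((1 - P t) * t powr lam + Q t) / lam" for t
  have dH: "(H has_real_derivative h t) (at t)" if t: "t > 0" for t
  proof -
    have "(H has_real_derivative (((0 - p t) * t powr lam + lam * t powr (lam - 1) * (1 - P t)) + p t * t powr lam) / lam) (at t)"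
      unfolding H_def by (intro DERIV_cdivide DERIV_add DERIV_mult[OF DERIV_diff[OF DERIV_const dP[OF t]] dpow[OF t]] dQ t)
    then show ?thesis using lam unfolding h_def by (simp add: mult.commute)
  qed
  have hasH: "(h has_integral H Y - H 1) {1..Y}" if "Y \<ge> 1" for Y
    proof (rule fundamental_theorem_of_calculus_interior)
      show "continuous_on {1..Y} H"
      proof (intro continuous_at_imp_continuous_on ballI)
        fix x assume "x \<in> {1..Y}"
        then show "isCont H x" using dH[of x] DERIV_isCont by auto
      qed
      show "(H has_vector_derivative h t) (at t)" if "t \<in> {1<..<Y}" for t
        using dH[of t] that by (simp add: has_real_derivative_iff_has_vector_derivative)
    qed (use that in simp)
  have intH: "integral {1..Y} h = H Y - H 1" if "Y \<ge> 1" for Y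
    using hasH[OF that] by (rule integral_unique)
  have limlin: "filterlim (\<lambda>t. y * t) at_top at_top"
    by (rule filterlim_tendsto_pos_mult_at_top[OF tendsto_const y filterlim_ident])
  have limQ: "(Q \<longlongrightarrow> Qinf) at_top"
    unfolding Q_def Qinf_def
    by (intro tendsto_divide tendsto_const filterlim_compose[OF L_lim[OF yl] limlin]) (use Gy ypl in auto)
  have limR: "((\<lambda>t. (1 - P t) * t powr lam) \<longlongrightarrow> 0) at_top"
  proof (rule tendsto_sandwich)
    show "\<forall>\<^sub>F t in at_top. 0 \<le> (1 - P t) * t powr lam"
      using eventually_ge_at_top[of 1]
    proof eventually_elim
      case (elim t)
      have "P t \<le> 1" unfolding P_def using L_le[OF y] Gy by simp
      then show ?case by simp
    qed
    show "\<forall>\<^sub>F t in at_top. (1 - P t) * t powr lam \<le>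
        (Gamma (y + lam) - lower_inc_gamma (y + lam) (y * t)) / (Gamma y * y powr lam)"
      using eventually_ge_at_top[of 1]
    proof eventually_elim
      case (elim t)
      have tl: "(y*t) powr lam * (Gamma y - lower_inc_gamma y (y*t)) \<le> Gamma (y + lam) - lower_inc_gamma (y + lam) (y*t)"
        by (rule tail[OF y lam]) (use y elim in simp)
      have "(1 - P t) * t powr lam = (y*t) powr lam * (Gamma y - lower_inc_gamma y (y*t)) / (Gamma y * y powr lam)"
      proof -
        have "(y*t) powr lam = y powr lam * t powr lam" using y elim by (simp add: powr_mult)
        moreover have "Gamma y \<noteq> 0" "y powr lam \<noteq> 0" using Gy ypl by auto
        ultimately show ?thesis unfolding P_def by (simp add: field_simps)
      qed
      also have "\<dots> \<le> (Gamma (y + lam) - lower_inc_gamma (y + lam) (y * t)) / (Gamma y * y powr lam)"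
        using tl Gy ypl by (intro divide_right_mono) auto
      finally show ?case .
    qed
    show "((\<lambda>t. 0) \<longlongrightarrow> (0::real)) at_top" by simp
    have "((\<lambda>t. (Gamma (y + lam) - lower_inc_gamma (y + lam) (y * t)) / (Gamma y * y powr lam)) \<longlongrightarrow>
        (Gamma (y + lam) - Gamma (y + lam)) / (Gamma y * y powr lam)) at_top"
      by (intro tendsto_divide tendsto_diff tendsto_const filterlim_compose[OF L_lim[OF yl] limlin]) (use Gy ypl in auto)
    then show "((\<lambda>t. (Gamma (y + lam) - lower_inc_gamma (y + lam) (y * t)) / (Gamma y * y powr lam)) \<longlongrightarrow> 0) at_top"
      by simp
  qed
  have limH: "(H \<longlongrightarrow> Qinf / lam) at_top"
  proof -
    have "(H \<longlongrightarrow> (0 + Qinf) / lam) at_top"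
      unfolding H_def by (intro tendsto_divide tendsto_add limR limQ tendsto_const) (use lam in auto)
    then show ?thesis by simp
  qed
  have hB: "(h has_integral (Qinf / lam - H 1)) {1..}"
  proof (rule has_integral_to_inf)
    show "h integrable_on {1..Y}" for Y
    proof (cases "Y \<ge> 1")
      case True
      from hasH[OF True] show ?thesis by (rule has_integral_integrable)
    next
      case False
      then show ?thesis by (simp add: integrable_on_empty)
    qed
    have lim0: "((\<lambda>Y. H Y - H 1) \<longlongrightarrow> Qinf / lam - H 1) at_top"
      by (intro tendsto_diff limH tendsto_const)
    have ev: "\<forall>\<^sub>F Y in at_top. integral {1..Y} h = H Y - H 1"
      using eventually_ge_at_top[of 1] by eventually_elim (simp add: intH)
    show "((\<lambda>Y. integral {1..Y} h) \<longlongrightarrow> Qinf / lam - H 1) at_top"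
      using lim0 tendsto_cong[OF ev] by simp
    show "h t \<ge> 0" if "t \<ge> 1" for t
    proof -
      have "P t \<le> 1" unfolding P_def using L_le[OF y] Gy by simp
      then show ?thesis unfolding h_def by simp
    qed
  qed
  have hB': "((\<lambda>t. (lower_inc_gamma y (y * t) / Gamma y - 1) * t powr (lam - 1)) has_integral -(Qinf / lam - H 1)) {1..}"
  proof -
    have "(\<lambda>t. (lower_inc_gamma y (y * t) / Gamma y - 1) * t powr (lam - 1)) = (\<lambda>t. - h t)"
      unfolding h_def P_def by (auto simp: fun_eq_iff algebra_simps)
    then show ?thesis using has_integral_neg[OF hB] by simp
  qed
  have hA': "((\<lambda>t. lower_inc_gamma y (y * t) / Gamma y * t powr (lam - 1)) has_integral F 1 - F 0) {0..1}"
    using hA unfolding P_def .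
  have fin: "F 1 - F 0 + -(Qinf / lam - H 1) = 1 / lam * (1 - 1 / g_lam lam y)"
  proof -
    have "1 / g_lam lam y = Qinf"
      unfolding g_lam_def Qinf_def by (simp add: add.commute)
    moreover have "F 1 - F 0 + -(Qinf / lam - H 1) = (1 - Qinf) / lam"
      using F0 lam unfolding F_def H_def by (simp add: field_simps)
    ultimately show ?thesis by simp
  qed
  show ?thesis using hA' hB' fin by blast
qed

end
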